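(* Let $B$ be a board with set of sinks $S$. If the extended full tilt graph $\hat G_F(B)$ (with sinks $S$) contains an arborescence of weight $w$ converging to its root, then the extended large tilt graph $\hat G_L(B,S)$ contains an arborescence of weight at most $w$ converging to its root.
   Context: Pixels are unit squares indexed by $\mathbb{Z}^2$. A board $B=(V,E)$ is a finite subgraph of the square grid graph on $\mathbb{Z}^2$; its boundary consists of pixel sides not shared with a neighbouring pixel joined by an edge of $E$. $S\subseteq V$ are sinks. For a pixel $p$, its row (column) segment is the maximal set of pixels reachable from $p$ using only horizontal (vertical) edges of $E$; $p^\ell,p^r$ are the leftmost/rightmost pixels of its row segment and $p^u,p^d$ the topmost/bottommost pixels of its column segment. The full tilt graph $G_F(B)$ has vertex set $V$ and edges $(p,p^x)$ for $x\in\{\ell,r,u,d\}$, $p^x\ne p$. A corner pixel is a pixel $p$ with $p=p^x=p^y$ for some $x\in\{\ell,r\}$, $y\in\{u,d\}$. The large tilt graph $G_L(B,S)$ is the subgraph of $G_F(B)$ induced by the vertex set consisting of (i) all pixels reachable in $G_F(B)$ from corner pixels, (ii) every sink $s$ and $s^\ell,s^r,s^u,s^d$, (iii) for every reflex corner of the boundary, the endpoints of the row and column segments of the pixels incident to that corner, (iv) all pixels on the intersection of a row segment and a column segment each containing a pixel included in (i)–(iii). Extended graph: for a directed graph $G$ with sinks $S$, $\hat G$ has vertex set $V(G)\cup\{r\}$ with new root $r$ and edges: every edge of $G$ with weight $0$; for every edge $(p,q)$ of $G$ with $(q,p)$ not an edge of $G$, the inverse edge $(q,p)$ with weight $1$;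 and $(s,r)$ with weight $0$ for $s\in S$. An arborescence converging to $r$ is a spanning subgraph in which every vertex other than $r$ has exactly one outgoing edge and a directed path to $r$; its weight is the sum of its edge weights. *)

theory Defs
  imports Main
begin

type_synonym pixel = "int \<times> int"

text \<open>Pixel (x,y) is the unit square [x,x+1] x [y,y+1]; y grows upwards.
  A board is given by its pixel set V and its edge set E, an edge being a
  two-element set of grid-adjacent pixels of V.\<close>

definition grid_adj :: "pixel \<Rightarrow> pixel \<Rightarrow> bool" where
  "grid_adj p q \<longleftrightarrow> \<bar>fst p - fst q\<bar> + \<bar>snd p - snd q\<bar> = 1"

definition board :: "pixel set \<Rightarrow> pixel set set \<Rightarrow> bool" where
  "board V E \<longleftrightarrow> finite V \<and>
     E \<subseteq> {{p, q} | p q. p \<in> V \<and> q \<in> V \<and> grid_adj p q}"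

definition hrel :: "pixel set set \<Rightarrow> (pixel \<times> pixel) set" where
  "hrel E = {(p, q). {p, q} \<in> E \<and> p \<noteq> q \<and> snd p = snd q}"

definition vrel :: "pixel set set \<Rightarrow> (pixel \<times> pixel) set" where
  "vrel E = {(p, q). {p, q} \<in> E \<and> p \<noteq> q \<and> fst p = fst q}"

definition rowseg :: "pixel set set \<Rightarrow> pixel \<Rightarrow> pixel set" where
  "rowseg E p = {q. (p, q) \<in> (hrel E)\<^sup>*}"

definition colseg :: "pixel set set \<Rightarrow> pixel \<Rightarrow> pixel set" where
  "colseg E p = {q. (p, q) \<in> (vrel E)\<^sup>*}"

datatype dir = L | R | U | D

fun tilt :: "pixel set set \<Rightarrow> dir \<Rightarrow> pixel \<Rightarrow> pixel" where
  "tilt E L p = (THE q. q \<in> rowseg E p \<and> (\<forall>q'\<in>rowseg E p. fst q \<le> fst q'))"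
| "tilt E R p = (THE q. q \<in> rowseg E p \<and> (\<forall>q'\<in>rowseg E p. fst q' \<le> fst q))"
| "tilt E U p = (THE q. q \<in> colseg E p \<and> (\<forall>q'\<in>colseg E p. snd q' \<le> snd q))"
| "tilt E D p = (THE q. q \<in> colseg E p \<and> (\<forall>q'\<in>colseg E p. snd q \<le> snd q'))"

definition full_tilt_edges :: "pixel set \<Rightarrow> pixel set set \<Rightarrow> (pixel \<times> pixel) set" where
  "full_tilt_edges V E = {(p, tilt E d p) | p d. p \<in> V \<and> tilt E d p \<noteq> p}"

definition corner_pixel :: "pixel set \<Rightarrow> pixel set set \<Rightarrow> pixel \<Rightarrow> bool" where
  "corner_pixel V E p \<longleftrightarrow> p \<in> V \<and>
     (\<exists>x \<in> {L, R}. \<exists>y \<in> {U, D}. tilt E x p = p \<and> tilt E y p = p)"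

text \<open>A lattice point c = (a,b) is a corner of the four pixels around it.\<close>
definition incident :: "int \<times> int \<Rightarrow> pixel set" where
  "incident c = {(fst c - 1, snd c - 1), (fst c, snd c - 1), (fst c - 1, snd c), (fst c, snd c)}"

text \<open>Horizontal / vertical neighbour of an incident pixel across the corner c.\<close>
definition hx :: "int \<times> int \<Rightarrow> pixel \<Rightarrow> pixel" where
  "hx c p = (2 * fst c - 1 - fst p, snd p)"

definition vy :: "int \<times> int \<Rightarrow> pixel \<Rightarrow> pixel" where
  "vy c p = (fst p, 2 * snd c - 1 - snd p)"

definition boundary_side :: "pixel set \<Rightarrow> pixel set set \<Rightarrow> pixel \<Rightarrow> pixel \<Rightarrow> bool" where
  "boundary_side V E p q \<longleftrightarrow> (p \<in> V \<or> q \<in> V) \<and> {p, q} \<notin> E"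

text \<open>c is a reflex corner of the boundary: the boundary sides meeting at c enclose,
  on the board side, an angle larger than 180 degrees, i.e. some pixel p of the board
  incident to c is joined to both its neighbours across c, while at least one of the
  two remaining sides at c is a boundary side.\<close>
definition reflex_corner :: "pixel set \<Rightarrow> pixel set set \<Rightarrow> int \<times> int \<Rightarrow> bool" where
  "reflex_corner V E c \<longleftrightarrow> (\<exists>p \<in> incident c. p \<in> V \<and>
      {p, hx c p} \<in> E \<and> {p, vy c p} \<in> E \<and>
      (boundary_side V E (hx c p) (hx c (vy c p)) \<or>
       boundary_side V E (vy c p) (hx c (vy c p))))"

definition large_base :: "pixel set \<Rightarrow> pixel set set \<Rightarrow> pixel set \<Rightarrow> pixel set" where
  "large_base V E S =
     {q. \<exists>c. corner_pixel V E c \<and> (c, q) \<in> (full_tilt_edges V E)\<^sup>*}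
   \<union> S \<union> {tilt E d s | s d. s \<in> S}
   \<union> {tilt E d p | c p d. reflex_corner V E c \<and> p \<in> incident c \<and> p \<in> V}"

definition large_vertices :: "pixel set \<Rightarrow> pixel set set \<Rightarrow> pixel set \<Rightarrow> pixel set" where
  "large_vertices V E S = large_base V E S \<union>
     {p. \<exists>a \<in> large_base V E S. \<exists>b \<in> large_base V E S. p \<in> rowseg E a \<and> p \<in> colseg E b}"

definition large_tilt_edges :: "pixel set \<Rightarrow> pixel set set \<Rightarrow> pixel set \<Rightarrow> (pixel \<times> pixel) set" where
  "large_tilt_edges V E S = {(p, q) \<in> full_tilt_edges V E.
       p \<in> large_vertices V E S \<and> q \<in> large_vertices V E S}"

text \<open>The new root r is None; old vertices v are Some v.\<close>
definition ext_vertices :: "'a set \<Rightarrow> 'a option set" where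
  "ext_vertices VG = Some ` VG \<union> {None}"

definition ext_edges :: "('a \<times> 'a) set \<Rightarrow> 'a set \<Rightarrow> ('a option \<times> 'a option) set" where
  "ext_edges EG S =
     {(Some p, Some q) | p q. (p, q) \<in> EG}
   \<union> {(Some q, Some p) | p q. (p, q) \<in> EG \<and> (q, p) \<notin> EG}
   \<union> {(Some s, None) | s. s \<in> S}"

definition ext_weight :: "('a \<times> 'a) set \<Rightarrow> 'a option \<times> 'a option \<Rightarrow> nat" where
  "ext_weight EG e = (case e of (Some p, Some q) \<Rightarrow> (if (p, q) \<in> EG then 0 else 1) | _ \<Rightarrow> 0)"

definition arborescence_to :: "'v set \<Rightarrow> ('v \<times> 'v) set \<Rightarrow> 'v \<Rightarrow> ('v \<times> 'v) set \<Rightarrow> bool" where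
  "arborescence_to VH EH r T \<longleftrightarrow> T \<subseteq> EH \<and>
     (\<forall>v \<in> VH - {r}. (\<exists>!w. (v, w) \<in> T) \<and> (v, r) \<in> T\<^sup>+)"

definition tree_weight :: "('a \<times> 'a) set \<Rightarrow> ('a option \<times> 'a option) set \<Rightarrow> nat" where
  "tree_weight EG T = (\<Sum>e\<in>T. ext_weight EG e)"

end

theory Submission
  imports Defs
begin


lemma abstract_retract:
  fixes V L S :: "'a set" and FE LE :: "('a \<times> 'a) set" and \<sigma> :: "'a \<Rightarrow> 'a"
    and T :: "('a option \<times> 'a option) set"
  assumes finV: "finite V" and FEV: "FE \<subseteq> V \<times> V" and LV: "L \<subseteq> V" and SL: "S \<subseteq> L"
    and sigL: "\<And>u. u \<in> V \<Longrightarrow> \<sigma> u \<in> L" and sigid: "\<And>u. u \<in> L \<Longrightarrow> \<sigma> u = u"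
    and hom: "\<And>u v. (u,v) \<in> FE \<Longrightarrow> \<sigma> u \<noteq> \<sigma> v \<Longrightarrow> (\<sigma> u, \<sigma> v) \<in> FE"
    and LEdef: "LE = {(p,q) \<in> FE. p \<in> L \<and> q \<in> L}"
    and arb: "arborescence_to (ext_vertices V) (ext_edges FE S) None T"
  shows "\<exists>T'. arborescence_to (ext_vertices L) (ext_edges LE S) None T' \<and> tree_weight LE T' \<le> tree_weight FE T"
proof -
  let ?EH = "ext_edges FE S"
  have TE: "T \<subseteq> ?EH" and uniq: "\<And>y. y \<in> V \<Longrightarrow> \<exists>!w. (Some y,w) \<in> T"
    and reach: "\<And>y. y \<in> V \<Longrightarrow> (Some y, None) \<in> T\<^sup>+"
    using arb unfolding arborescence_to_def ext_vertices_def by auto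
  have edge: "\<And>a b. (a,b) \<in> T \<Longrightarrow> \<exists>y\<in>V. a = Some y \<and>
      ((b = None \<and> y \<in> S) \<or> (\<exists>z\<in>V. b = Some z \<and> ((y,z) \<in> FE \<or> ((z,y) \<in> FE \<and> (y,z) \<notin> FE))))"
  proof -
    fix a b assume "(a,b) \<in> T"
    then have "(a,b) \<in> ?EH" using TE by auto
    then show "?thesis a b" unfolding ext_edges_def using FEV SL LV by blast
  qed
  define f where "f v = (THE w. (v,w) \<in> T)" for v
  have fT: "\<And>y. y \<in> V \<Longrightarrow> (Some y, f (Some y)) \<in> T"
    unfolding f_def by (rule theI') (rule uniq)
  have Tf: "\<And>a b. (a,b) \<in> T \<Longrightarrow> b = f a"
  proof -
    fix a b assume ab: "(a,b) \<in> T"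
    then obtain y where y: "y \<in> V" "a = Some y" using edge by blast
    show "b = f a" using uniq[OF y(1)] fT[OF y(1)] ab y(2) by blast
  qed
  have exn: "\<exists>n. (f^^n) v = None" if "(v, None) \<in> T\<^sup>+" for v
    using that
  proof (induction rule: converse_trancl_induct)
    case (base y)
    then have "f y = None" using Tf by auto
    then have "(f^^1) y = None" by simp
    then show ?case by blast
  next
    case (step y z)
    then obtain n where "(f^^n) z = None" by auto
    moreover have "z = f y" using step Tf by auto
    ultimately have "(f^^(Suc n)) y = None" by (simp add: funpow_Suc_right del: funpow.simps)
    then show ?case by blast
  qed
  define rk where "rk v = (LEAST n. (f^^n) v = None)" for v
  have rk_dec: "rk (Some z) < rk (Some y)" if yV: "y \<in> V" and fy: "f (Some y) = Some z" for y z
  proof -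
    obtain n where n: "(f^^n) (Some y) = None" using exn reach[OF yV] by blast
    have r: "(f^^(rk (Some y))) (Some y) = None" unfolding rk_def using n by (rule LeastI)
    then have "rk (Some y) \<noteq> 0" by (metis funpow_0 option.distinct(1))
    then obtain m where m: "rk (Some y) = Suc m" using not0_implies_Suc by blast
    then have "(f^^m) (Some z) = None" using r fy by (simp add: funpow_Suc_right del: funpow.simps)
    then have "rk (Some z) \<le> m" unfolding rk_def by (rule Least_le)
    then show ?thesis using m by simp
  qed
  define ys where "ys v = (SOME y. y \<in> V \<and> \<sigma> y = v \<and> (\<forall>y'. y' \<in> V \<and> \<sigma> y' = v \<longrightarrow> rk (Some y) \<le> rk (Some y')))" for v
  have ys: "ys v \<in> V \<and> \<sigma> (ys v) = v \<and> (\<forall>y'. y' \<in> V \<and> \<sigma> y' = v \<longrightarrow> rk (Some (ys v)) \<le> rk (Some y'))"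
    if "v \<in> L" for v
  proof -
    have "v \<in> V \<and> \<sigma> v = v" using that LV sigid by auto
    then have "\<exists>y. (y \<in> V \<and> \<sigma> y = v) \<and> (\<forall>y'. (y' \<in> V \<and> \<sigma> y' = v) \<longrightarrow> rk (Some y) \<le> rk (Some y'))"
      by (rule ex_has_least_nat)
    then have "\<exists>y. y \<in> V \<and> \<sigma> y = v \<and> (\<forall>y'. y' \<in> V \<and> \<sigma> y' = v \<longrightarrow> rk (Some y) \<le> rk (Some y'))" by blast
    then show ?thesis unfolding ys_def by (rule someI_ex)
  qed
  define g where "g v = map_option \<sigma> (f (Some (ys v)))" for v
  have key: "(Some v, g v) \<in> ext_edges LE S \<and>
      ext_weight LE (Some v, g v) \<le> ext_weight FE (Some (ys v), f (Some (ys v))) \<and>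
      (\<forall>v'. g v = Some v' \<longrightarrow> v' \<in> L \<and> rk (Some (ys v')) < rk (Some (ys v)))" if vL: "v \<in> L" for v
  proof -
    let ?y = "ys v"
    have y: "?y \<in> V" "\<sigma> ?y = v" and ymin: "\<And>y'. y' \<in> V \<Longrightarrow> \<sigma> y' = v \<Longrightarrow> rk (Some ?y) \<le> rk (Some y')"
      using ys[OF vL] by auto
    have e: "(Some ?y, f (Some ?y)) \<in> T" using fT y(1) by blast
    from edge[OF e] have
      "(f (Some ?y) = None \<and> ?y \<in> S) \<or> (\<exists>z\<in>V. f (Some ?y) = Some z \<and> ((?y,z) \<in> FE \<or> ((z,?y) \<in> FE \<and> (?y,z) \<notin> FE)))"
      by auto
    then show ?thesis
    proof
      assume a: "f (Some ?y) = None \<and> ?y \<in> S"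
      then have "v \<in> S" using y sigid SL by auto
      then show ?thesis using a unfolding g_def ext_edges_def ext_weight_def by auto
    next
      assume "\<exists>z\<in>V. f (Some ?y) = Some z \<and> ((?y,z) \<in> FE \<or> ((z,?y) \<in> FE \<and> (?y,z) \<notin> FE))"
      then obtain z where z: "z \<in> V" "f (Some ?y) = Some z" and zc: "(?y,z) \<in> FE \<or> ((z,?y) \<in> FE \<and> (?y,z) \<notin> FE)"
        by blast
      have rz: "rk (Some z) < rk (Some ?y)" using rk_dec y(1) z(2) by blast
      have sz: "\<sigma> z \<noteq> v" using ymin[OF z(1)] rz by fastforce
      have szL: "\<sigma> z \<in> L" using sigL z(1) by blast
      have gv: "g v = Some (\<sigma> z)" unfolding g_def using z(2) by simp
      have third: "\<forall>v'. g v = Some v' \<longrightarrow> v' \<in> L \<and> rk (Some (ys v')) < rk (Some (ys v))"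
      proof (intro allI impI)
        fix v' assume "g v = Some v'"
        then have v': "v' = \<sigma> z" using gv by simp
        have "rk (Some (ys v')) \<le> rk (Some z)" using ys[OF szL] z(1) v' by blast
        then show "v' \<in> L \<and> rk (Some (ys v')) < rk (Some (ys v))" using rz v' szL by simp
      qed
      from zc show ?thesis
      proof
        assume fe: "(?y,z) \<in> FE"
        then have "(v, \<sigma> z) \<in> LE" using hom[OF fe] y(2) sz LEdef vL szL by auto
        then show ?thesis using gv third unfolding ext_edges_def ext_weight_def by auto
      next
        assume fe: "(z,?y) \<in> FE \<and> (?y,z) \<notin> FE"
        then have "(\<sigma> z, v) \<in> LE" using hom[of z ?y] y(2) sz LEdef vL szL by auto
        moreover have "ext_weight FE (Some ?y, f (Some ?y)) = 1" using fe z(2) unfolding ext_weight_def by auto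
        ultimately show ?thesis using gv third unfolding ext_edges_def ext_weight_def by auto
      qed
    qed
  qed
  define T' where "T' = (\<lambda>v. (Some v, g v)) ` L"
  have arbL: "arborescence_to (ext_vertices L) (ext_edges LE S) None T'"
    unfolding arborescence_to_def
  proof (intro conjI ballI)
    show "T' \<subseteq> ext_edges LE S" unfolding T'_def using key by auto
  next
    fix x assume x: "x \<in> ext_vertices L - {None}"
    then obtain v where v: "v \<in> L" "x = Some v" unfolding ext_vertices_def by auto
    show "\<exists>!w. (x, w) \<in> T'" using v unfolding T'_def by auto
    have "\<And>n v. v \<in> L \<Longrightarrow> rk (Some (ys v)) = n \<Longrightarrow> (Some v, None) \<in> T'\<^sup>+"
    proof -
      fix n
      show "\<And>v. v \<in> L \<Longrightarrow> rk (Some (ys v)) = n \<Longrightarrow> (Some v, None) \<in> T'\<^sup>+"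
      proof (induction n rule: less_induct)
        case (less n v)
        have ed: "(Some v, g v) \<in> T'" unfolding T'_def using less.prems by auto
        show ?case
        proof (cases "g v")
          case None
          then show ?thesis using ed by auto
        next
          case (Some v')
          then have "v' \<in> L" "rk (Some (ys v')) < n" using key[OF less.prems(1)] less.prems(2) by auto
          then have "(Some v', None) \<in> T'\<^sup>+" using less.IH by blast
          then show ?thesis using ed Some by (metis trancl_into_trancl2)
        qed
      qed
    qed
    then show "(x, None) \<in> T'\<^sup>+" using v by blast
  qed
  have finEH: "finite ?EH"
  proof -
    have "?EH \<subseteq> (Some ` V \<union> {None}) \<times> (Some ` V \<union> {None})" unfolding ext_edges_def using FEV SL LV by auto
    then show ?thesis by (rule finite_subset) (use finV in auto)
  qed
  have finT: "finite T" using finite_subset[OF TE finEH] .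
  have finL: "finite L" using finite_subset[OF LV finV] .
  define h where "h v = (Some (ys v), f (Some (ys v)))" for v
  have "tree_weight LE T' = (\<Sum>v\<in>L. ext_weight LE (Some v, g v))"
    unfolding tree_weight_def T'_def by (subst sum.reindex) (auto simp: inj_on_def)
  also have "\<dots> \<le> (\<Sum>v\<in>L. ext_weight FE (h v))"
    unfolding h_def by (rule sum_mono) (use key in blast)
  also have "\<dots> = sum (ext_weight FE) (h ` L)"
  proof (subst sum.reindex)
    show "inj_on h L"
    proof (rule inj_onI)
      fix a b assume "a \<in> L" "b \<in> L" "h a = h b"
      then show "a = b" unfolding h_def using ys by (metis option.inject prod.inject)
    qed
  qed simp
  also have "\<dots> \<le> sum (ext_weight FE) T"
    by (rule sum_mono2[OF finT]) (auto simp: h_def intro!: fT dest: ys)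
  finally show ?thesis using arbL by (auto simp: tree_weight_def)
qed



definition hE :: "pixel set set \<Rightarrow> int \<Rightarrow> int \<Rightarrow> bool" where
  "hE E x y \<longleftrightarrow> {(x,y),(x+1,y)} \<in> E"
definition vE :: "pixel set set \<Rightarrow> int \<Rightarrow> int \<Rightarrow> bool" where
  "vE E x y \<longleftrightarrow> {(x,y),(x,y+1)} \<in> E"
definition hc :: "pixel set set \<Rightarrow> int \<Rightarrow> int \<Rightarrow> int \<Rightarrow> bool" where
  "hc E y a b \<longleftrightarrow> (\<forall>x. min a b \<le> x \<and> x < max a b \<longrightarrow> hE E x y)"
definition vc :: "pixel set set \<Rightarrow> int \<Rightarrow> int \<Rightarrow> int \<Rightarrow> bool" where
  "vc E x a b \<longleftrightarrow> (\<forall>y. min a b \<le> y \<and> y < max a b \<longrightarrow> vE E x y)"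

lemma hc_refl: "hc E y a a" unfolding hc_def by auto
lemma hc_sym: "hc E y a b = hc E y b a" unfolding hc_def by (auto simp: min.commute max.commute)
lemma hc_trans: assumes "hc E y a b" "hc E y b c" shows "hc E y a c"
  unfolding hc_def
proof (intro allI impI)
  fix x assume x: "min a c \<le> x \<and> x < max a c"
  show "hE E x y"
  proof (cases "min a b \<le> x \<and> x < max a b")
    case True then show ?thesis using assms(1) unfolding hc_def by blast
  next
    case False
    then have "min b c \<le> x \<and> x < max b c" using x by (auto simp: min_def max_def split: if_splits)
    then show ?thesis using assms(2) unfolding hc_def by blast
  qed
qed
lemma hc_edge: "hc E y a b \<Longrightarrow> min a b \<le> x \<Longrightarrow> x < max a b \<Longrightarrow> hE E x y"
  unfolding hc_def by blast
lemma hc_mid: "hc E y a b \<Longrightarrow> min a b \<le> c \<Longrightarrow> c \<le> max a b \<Longrightarrow> hc E y a c"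
  unfolding hc_def by (auto simp: min_def max_def split: if_splits)
lemma hc_one: "hE E x y \<Longrightarrow> hc E y x (x+1)"
  unfolding hc_def by (auto simp: min_def max_def)
lemma hc_up: "hc E y a b \<Longrightarrow> hE E b y \<Longrightarrow> hc E y a (b+1)"
  using hc_trans hc_one by blast
lemma hc_down: "hc E y a b \<Longrightarrow> hE E (b-1) y \<Longrightarrow> hc E y a (b-1)"
  using hc_trans hc_one hc_sym by (metis diff_add_cancel)

lemma vc_refl: "vc E x a a" unfolding vc_def by auto
lemma vc_sym: "vc E x a b = vc E x b a" unfolding vc_def by (auto simp: min.commute max.commute)
lemma vc_trans: assumes "vc E x a b" "vc E x b c" shows "vc E x a c"
  unfolding vc_def
proof (intro allI impI)
  fix y assume y: "min a c \<le> y \<and> y < max a c"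
  show "vE E x y"
  proof (cases "min a b \<le> y \<and> y < max a b")
    case True then show ?thesis using assms(1) unfolding vc_def by blast
  next
    case False
    then have "min b c \<le> y \<and> y < max b c" using y by (auto simp: min_def max_def split: if_splits)
    then show ?thesis using assms(2) unfolding vc_def by blast
  qed
qed
lemma vc_edge: "vc E x a b \<Longrightarrow> min a b \<le> y \<Longrightarrow> y < max a b \<Longrightarrow> vE E x y"
  unfolding vc_def by blast
lemma vc_mid: "vc E x a b \<Longrightarrow> min a b \<le> c \<Longrightarrow> c \<le> max a b \<Longrightarrow> vc E x a c"
  unfolding vc_def by (auto simp: min_def max_def split: if_splits)
lemma vc_one: "vE E x y \<Longrightarrow> vc E x y (y+1)"
  unfolding vc_def by (auto simp: min_def max_def)
lemma vc_up: "vc E x a b \<Longrightarrow> vE E x b \<Longrightarrow> vc E x a (b+1)"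
  using vc_trans vc_one by blast
lemma vc_down: "vc E x a b \<Longrightarrow> vE E x (b-1) \<Longrightarrow> vc E x a (b-1)"
  using vc_trans vc_one vc_sym by (metis diff_add_cancel)

lemma reflexI:
  assumes "p \<in> incident c" "p \<in> V" "{p, hx c p} \<in> E" "{p, vy c p} \<in> E"
    "boundary_side V E (hx c p) (hx c (vy c p)) \<or> boundary_side V E (vy c p) (hx c (vy c p))"
  shows "reflex_corner V E c"
  unfolding reflex_corner_def using assms by blast

locale tb =
  fixes V :: "pixel set" and E :: "pixel set set" and S :: "pixel set"
  assumes bd: "board V E" and SV: "S \<subseteq> V"
begin

lemma finV: "finite V" using bd unfolding board_def by auto

lemma edgeV: assumes "{p,q} \<in> E" shows "p \<in> V" "q \<in> V"
proof -
  obtain a b where "{p,q} = {a,b}" "a \<in> V" "b \<in> V" using assms bd unfolding board_def by blast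
  then show "p \<in> V" "q \<in> V" by (auto simp: doubleton_eq_iff)
qed

lemma edge_adj: assumes "{p,q} \<in> E" shows "grid_adj p q"
proof -
  obtain a b where "{p,q} = {a,b}" "grid_adj a b" using assms bd unfolding board_def by blast
  then show ?thesis by (auto simp: doubleton_eq_iff grid_adj_def)
qed

lemma hE_V: "hE E x y \<Longrightarrow> (x,y) \<in> V \<and> (x+1,y) \<in> V"
  unfolding hE_def using edgeV by blast
lemma vE_V: "vE E x y \<Longrightarrow> (x,y) \<in> V \<and> (x,y+1) \<in> V"
  unfolding vE_def using edgeV by blast

lemma hrel_char: "((a,b),(c,d)) \<in> hrel E \<longleftrightarrow> d = b \<and> ((c = a+1 \<and> hE E a b) \<or> (a = c+1 \<and> hE E c b))"
proof
  assume h: "((a,b),(c,d)) \<in> hrel E"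
  then have e: "{(a,b),(c,d)} \<in> E" "(a,b) \<noteq> (c,d)" "d = b" unfolding hrel_def by auto
  then have "\<bar>a - c\<bar> = 1" using edge_adj[OF e(1)] unfolding grid_adj_def by auto
  then have "c = a + 1 \<or> a = c + 1" by auto
  then show "d = b \<and> ((c = a+1 \<and> hE E a b) \<or> (a = c+1 \<and> hE E c b))"
    using e unfolding hE_def by (auto simp: insert_commute)
next
  assume "d = b \<and> ((c = a+1 \<and> hE E a b) \<or> (a = c+1 \<and> hE E c b))"
  then show "((a,b),(c,d)) \<in> hrel E" unfolding hrel_def hE_def by (auto simp: insert_commute)
qed

lemma vrel_char: "((a,b),(c,d)) \<in> vrel E \<longleftrightarrow> c = a \<and> ((d = b+1 \<and> vE E a b) \<or> (b = d+1 \<and> vE E a d))"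
proof
  assume h: "((a,b),(c,d)) \<in> vrel E"
  then have e: "{(a,b),(c,d)} \<in> E" "(a,b) \<noteq> (c,d)" "c = a" unfolding vrel_def by auto
  then have "\<bar>b - d\<bar> = 1" using edge_adj[OF e(1)] unfolding grid_adj_def by auto
  then have "d = b + 1 \<or> b = d + 1" by auto
  then show "c = a \<and> ((d = b+1 \<and> vE E a b) \<or> (b = d+1 \<and> vE E a d))"
    using e unfolding vE_def by (auto simp: insert_commute)
next
  assume "c = a \<and> ((d = b+1 \<and> vE E a b) \<or> (b = d+1 \<and> vE E a d))"
  then show "((a,b),(c,d)) \<in> vrel E" unfolding vrel_def vE_def by (auto simp: insert_commute)
qed

lemma rowseg_char: "(c,d) \<in> rowseg E (a,b) \<longleftrightarrow> d = b \<and> hc E b a c"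
proof
  assume "(c,d) \<in> rowseg E (a,b)"
  then have "((a,b),(c,d)) \<in> (hrel E)\<^sup>*" unfolding rowseg_def by auto
  then have "snd (c,d) = b \<and> hc E b a (fst (c,d))"
  proof (induction rule: rtrancl_induct)
    case base then show ?case by (simp add: hc_refl)
  next
    case (step q r)
    obtain q1 q2 r1 r2 where qr: "q = (q1,q2)" "r = (r1,r2)" by fastforce
    then have "r2 = q2 \<and> ((r1 = q1+1 \<and> hE E q1 q2) \<or> (q1 = r1+1 \<and> hE E r1 q2))"
      using step.hyps(2) hrel_char by blast
    then show ?case using step.IH qr hc_up[of E b a q1] hc_down[of E b a q1] by auto
  qed
  then show "d = b \<and> hc E b a c" by simp
next
  assume a: "d = b \<and> hc E b a c"
  have up: "hc E b a c' \<longrightarrow> ((a,b),(c',b)) \<in> (hrel E)\<^sup>*" if "a \<le> c'" for c'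
    using that
  proof (induction c' rule: int_ge_induct)
    case base then show ?case by simp
  next
    case (step i)
    show ?case
    proof
      assume h: "hc E b a (i+1)"
      then have "hc E b a i" using hc_mid[OF h] step.hyps by auto
      moreover have "hE E i b" using hc_edge[OF h] step.hyps by auto
      moreover have "((i,b),(i+1,b)) \<in> hrel E" using hrel_char \<open>hE E i b\<close> by blast
      ultimately show "((a,b),(i+1,b)) \<in> (hrel E)\<^sup>*" using step.IH
        by (meson rtrancl.rtrancl_into_rtrancl)
    qed
  qed
  have dn: "hc E b a c' \<longrightarrow> ((a,b),(c',b)) \<in> (hrel E)\<^sup>*" if "c' \<le> a" for c'
    using that
  proof (induction c' rule: int_le_induct)
    case base then show ?case by simp
  next
    case (step i)
    show ?case
    proof
      assume h: "hc E b a (i-1)"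
      then have "hc E b a i" using hc_mid[OF h] step.hyps by auto
      moreover have "hE E (i-1) b" using hc_edge[OF h] step.hyps by auto
      moreover have "((i,b),(i-1,b)) \<in> hrel E" using hrel_char[of i b "i-1" b] \<open>hE E (i-1) b\<close> by simp
      ultimately show "((a,b),(i-1,b)) \<in> (hrel E)\<^sup>*" using step.IH
        by (meson rtrancl.rtrancl_into_rtrancl)
    qed
  qed
  show "(c,d) \<in> rowseg E (a,b)" unfolding rowseg_def using a up dn by (cases "a \<le> c") auto
qed

lemma colseg_char: "(c,d) \<in> colseg E (a,b) \<longleftrightarrow> c = a \<and> vc E a b d"
proof
  assume "(c,d) \<in> colseg E (a,b)"
  then have "((a,b),(c,d)) \<in> (vrel E)\<^sup>*" unfolding colseg_def by auto
  then have "fst (c,d) = a \<and> vc E a b (snd (c,d))"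
  proof (induction rule: rtrancl_induct)
    case base then show ?case by (simp add: vc_refl)
  next
    case (step q r)
    obtain q1 q2 r1 r2 where qr: "q = (q1,q2)" "r = (r1,r2)" by fastforce
    then have "r1 = q1 \<and> ((r2 = q2+1 \<and> vE E q1 q2) \<or> (q2 = r2+1 \<and> vE E q1 r2))"
      using step.hyps(2) vrel_char by blast
    then show ?case using step.IH qr vc_up[of E a b q2] vc_down[of E a b q2] by auto
  qed
  then show "c = a \<and> vc E a b d" by simp
next
  assume a: "c = a \<and> vc E a b d"
  have up: "vc E a b d' \<longrightarrow> ((a,b),(a,d')) \<in> (vrel E)\<^sup>*" if "b \<le> d'" for d'
    using that
  proof (induction d' rule: int_ge_induct)
    case base then show ?case by simp
  next
    case (step i)
    show ?case
    proof
      assume h: "vc E a b (i+1)"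
      then have "vc E a b i" using vc_mid[OF h] step.hyps by auto
      moreover have "vE E a i" using vc_edge[OF h] step.hyps by auto
      moreover have "((a,i),(a,i+1)) \<in> vrel E" using vrel_char \<open>vE E a i\<close> by blast
      ultimately show "((a,b),(a,i+1)) \<in> (vrel E)\<^sup>*" using step.IH
        by (meson rtrancl.rtrancl_into_rtrancl)
    qed
  qed
  have dn: "vc E a b d' \<longrightarrow> ((a,b),(a,d')) \<in> (vrel E)\<^sup>*" if "d' \<le> b" for d'
    using that
  proof (induction d' rule: int_le_induct)
    case base then show ?case by simp
  next
    case (step i)
    show ?case
    proof
      assume h: "vc E a b (i-1)"
      then have "vc E a b i" using vc_mid[OF h] step.hyps by auto
      moreover have "vE E a (i-1)" using vc_edge[OF h] step.hyps by auto
      moreover have "((a,i),(a,i-1)) \<in> vrel E" using vrel_char[of a i a "i-1"] \<open>vE E a (i-1)\<close> by simp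
      ultimately show "((a,b),(a,i-1)) \<in> (vrel E)\<^sup>*" using step.IH
        by (meson rtrancl.rtrancl_into_rtrancl)
    qed
  qed
  show "(c,d) \<in> colseg E (a,b)" unfolding colseg_def using a up dn by (cases "b \<le> d") auto
qed

end


context tb begin

lemma hc_V: assumes "hc E b a c" "(a,b) \<in> V" shows "(c,b) \<in> V"
proof -
  consider "c = a" | "a < c" | "c < a" by linarith
  then show ?thesis
  proof cases
    case 2 then have "hE E (c-1) b" using hc_edge[OF assms(1), of "c-1"] by auto
    then show ?thesis using hE_V by fastforce
  next
    case 3 then have "hE E c b" using hc_edge[OF assms(1), of c] by auto
    then show ?thesis using hE_V by fastforce
  qed (use assms in auto)
qed

lemma vc_V: assumes "vc E a b d" "(a,b) \<in> V" shows "(a,d) \<in> V"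
proof -
  consider "d = b" | "b < d" | "d < b" by linarith
  then show ?thesis
  proof cases
    case 2 then have "vE E a (d-1)" using vc_edge[OF assms(1), of "d-1"] by auto
    then show ?thesis using vE_V by fastforce
  next
    case 3 then have "vE E a d" using vc_edge[OF assms(1), of d] by auto
    then show ?thesis using vE_V by fastforce
  qed (use assms in auto)
qed

lemma finA_h: "finite {c. hc E b a c}"
proof (rule finite_subset)
  show "{c. hc E b a c} \<subseteq> insert a (fst ` V)"
  proof
    fix c assume "c \<in> {c. hc E b a c}"
    then have h: "hc E b a c" by simp
    consider "c = a" | "a < c" | "c < a" by linarith
    then show "c \<in> insert a (fst ` V)"
    proof cases
      case 2 then have "hE E (c-1) b" using hc_edge[OF h, of "c-1"] by auto
      then have "(c,b) \<in> V" using hE_V by fastforce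
      then show ?thesis by force
    next
      case 3 then have "hE E c b" using hc_edge[OF h, of c] by auto
      then have "(c,b) \<in> V" using hE_V by fastforce
      then show ?thesis by force
    qed simp
  qed
  show "finite (insert a (fst ` V))" using finV by simp
qed

lemma finA_v: "finite {d. vc E a b d}"
proof (rule finite_subset)
  show "{d. vc E a b d} \<subseteq> insert b (snd ` V)"
  proof
    fix d assume "d \<in> {d. vc E a b d}"
    then have h: "vc E a b d" by simp
    consider "d = b" | "b < d" | "d < b" by linarith
    then show "d \<in> insert b (snd ` V)"
    proof cases
      case 2 then have "vE E a (d-1)" using vc_edge[OF h, of "d-1"] by auto
      then have "(a,d) \<in> V" using vE_V by fastforce
      then show ?thesis by force
    next
      case 3 then have "vE E a d" using vc_edge[OF h, of d] by auto
      then have "(a,d) \<in> V" using vE_V by fastforce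
      then show ?thesis by force
    qed simp
  qed
  show "finite (insert b (snd ` V))" using finV by simp
qed

lemma tiltL_eq: assumes "hc E b a l" "\<not> hE E (l-1) b" shows "tilt E L (a,b) = (l,b)"
proof -
  have low: "l \<le> c" if "hc E b a c" for c
  proof (rule ccontr)
    assume "\<not> l \<le> c"
    have "hc E b c l" using hc_trans[OF that[unfolded hc_sym[of E b a c]] assms(1)] .
    then have "hE E (l-1) b" using hc_edge[of E b c l "l-1"] \<open>\<not> l \<le> c\<close> by auto
    then show False using assms(2) by simp
  qed
  show ?thesis unfolding tilt.simps
  proof (rule the_equality)
    show "(l,b) \<in> rowseg E (a,b) \<and> (\<forall>q'\<in>rowseg E (a,b). fst (l,b) \<le> fst q')"
      using assms(1) low by (auto simp: rowseg_char)
  next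
    fix q assume q: "q \<in> rowseg E (a,b) \<and> (\<forall>q'\<in>rowseg E (a,b). fst q \<le> fst q')"
    obtain c d where cd: "q = (c,d)" by fastforce
    then have "d = b" "hc E b a c" using q rowseg_char by auto
    moreover have "c \<le> l" using q cd assms(1) rowseg_char[of l b a b] by auto
    ultimately show "q = (l,b)" using low cd by force
  qed
qed

lemma tiltR_eq: assumes "hc E b a r" "\<not> hE E r b" shows "tilt E R (a,b) = (r,b)"
proof -
  have high: "c \<le> r" if "hc E b a c" for c
  proof (rule ccontr)
    assume "\<not> c \<le> r"
    have "hc E b r c" using hc_trans[OF assms(1)[unfolded hc_sym[of E b a r]] that] .
    then have "hE E r b" using hc_edge[of E b r c r] \<open>\<not> c \<le> r\<close> by auto
    then show False using assms(2) by simp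
  qed
  show ?thesis unfolding tilt.simps
  proof (rule the_equality)
    show "(r,b) \<in> rowseg E (a,b) \<and> (\<forall>q'\<in>rowseg E (a,b). fst q' \<le> fst (r,b))"
      using assms(1) high by (auto simp: rowseg_char)
  next
    fix q assume q: "q \<in> rowseg E (a,b) \<and> (\<forall>q'\<in>rowseg E (a,b). fst q' \<le> fst q)"
    obtain c d where cd: "q = (c,d)" by fastforce
    then have "d = b" "hc E b a c" using q rowseg_char by auto
    moreover have "r \<le> c" using q cd assms(1) rowseg_char[of r b a b] by auto
    ultimately show "q = (r,b)" using high cd by force
  qed
qed

lemma tiltU_eq: assumes "vc E a b u" "\<not> vE E a u" shows "tilt E U (a,b) = (a,u)"
proof -
  have high: "d \<le> u" if "vc E a b d" for d
  proof (rule ccontr)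
    assume "\<not> d \<le> u"
    have "vc E a u d" using vc_trans[OF assms(1)[unfolded vc_sym[of E a b u]] that] .
    then have "vE E a u" using vc_edge[of E a u d u] \<open>\<not> d \<le> u\<close> by auto
    then show False using assms(2) by simp
  qed
  show ?thesis unfolding tilt.simps
  proof (rule the_equality)
    show "(a,u) \<in> colseg E (a,b) \<and> (\<forall>q'\<in>colseg E (a,b). snd q' \<le> snd (a,u))"
      using assms(1) high by (auto simp: colseg_char)
  next
    fix q assume q: "q \<in> colseg E (a,b) \<and> (\<forall>q'\<in>colseg E (a,b). snd q' \<le> snd q)"
    obtain c d where cd: "q = (c,d)" by fastforce
    then have "c = a" "vc E a b d" using q colseg_char by auto
    moreover have "u \<le> d" using q cd assms(1) colseg_char[of a u a b] by auto
    ultimately show "q = (a,u)" using high cd by force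
  qed
qed

lemma tiltD_eq: assumes "vc E a b l" "\<not> vE E a (l-1)" shows "tilt E D (a,b) = (a,l)"
proof -
  have low: "l \<le> c" if "vc E a b c" for c
  proof (rule ccontr)
    assume "\<not> l \<le> c"
    have "vc E a c l" using vc_trans[OF that[unfolded vc_sym[of E a b c]] assms(1)] .
    then have "vE E a (l-1)" using vc_edge[of E a c l "l-1"] \<open>\<not> l \<le> c\<close> by auto
    then show False using assms(2) by simp
  qed
  show ?thesis unfolding tilt.simps
  proof (rule the_equality)
    show "(a,l) \<in> colseg E (a,b) \<and> (\<forall>q'\<in>colseg E (a,b). snd (a,l) \<le> snd q')"
      using assms(1) low by (auto simp: colseg_char)
  next
    fix q assume q: "q \<in> colseg E (a,b) \<and> (\<forall>q'\<in>colseg E (a,b). snd q \<le> snd q')"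
    obtain c d where cd: "q = (c,d)" by fastforce
    then have "c = a" "vc E a b d" using q colseg_char by auto
    moreover have "d \<le> l" using q cd assms(1) colseg_char[of a l a b] by auto
    ultimately show "q = (a,l)" using low cd by force
  qed
qed

lemma tiltL: "\<exists>l. tilt E L (a,b) = (l,b) \<and> hc E b a l \<and> \<not> hE E (l-1) b"
proof -
  let ?A = "{c. hc E b a c}"
  have fin: "finite ?A" by (rule finA_h)
  have ne: "a \<in> ?A" by (simp add: hc_refl)
  define l where "l = Min ?A"
  have l: "hc E b a l" using Min_in[OF fin] ne l_def by blast
  have "\<not> hE E (l-1) b"
  proof
    assume "hE E (l-1) b"
    then have "l - 1 \<in> ?A" using hc_down[OF l] by simp
    then have "l \<le> l - 1" using Min_le[OF fin] l_def by blast
    then show False by simp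
  qed
  then show ?thesis using l tiltL_eq by blast
qed

lemma tiltR: "\<exists>r. tilt E R (a,b) = (r,b) \<and> hc E b a r \<and> \<not> hE E r b"
proof -
  let ?A = "{c. hc E b a c}"
  have fin: "finite ?A" by (rule finA_h)
  have ne: "a \<in> ?A" by (simp add: hc_refl)
  define r where "r = Max ?A"
  have r: "hc E b a r" using Max_in[OF fin] ne r_def by blast
  have "\<not> hE E r b"
  proof
    assume "hE E r b"
    then have "r + 1 \<in> ?A" using hc_up[OF r] by simp
    then have "r + 1 \<le> r" using Max_ge[OF fin] r_def by blast
    then show False by simp
  qed
  then show ?thesis using r tiltR_eq by blast
qed

lemma tiltU: "\<exists>u. tilt E U (a,b) = (a,u) \<and> vc E a b u \<and> \<not> vE E a u"
proof -
  let ?A = "{d. vc E a b d}"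
  have fin: "finite ?A" by (rule finA_v)
  have ne: "b \<in> ?A" by (simp add: vc_refl)
  define u where "u = Max ?A"
  have u: "vc E a b u" using Max_in[OF fin] ne u_def by blast
  have "\<not> vE E a u"
  proof
    assume "vE E a u"
    then have "u + 1 \<in> ?A" using vc_up[OF u] by simp
    then have "u + 1 \<le> u" using Max_ge[OF fin] u_def by blast
    then show False by simp
  qed
  then show ?thesis using u tiltU_eq by blast
qed

lemma tiltD: "\<exists>l. tilt E D (a,b) = (a,l) \<and> vc E a b l \<and> \<not> vE E a (l-1)"
proof -
  let ?A = "{d. vc E a b d}"
  have fin: "finite ?A" by (rule finA_v)
  have ne: "b \<in> ?A" by (simp add: vc_refl)
  define l where "l = Min ?A"
  have l: "vc E a b l" using Min_in[OF fin] ne l_def by blast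
  have "\<not> vE E a (l-1)"
  proof
    assume "vE E a (l-1)"
    then have "l - 1 \<in> ?A" using vc_down[OF l] by simp
    then have "l \<le> l - 1" using Min_le[OF fin] l_def by blast
    then show False by simp
  qed
  then show ?thesis using l tiltD_eq by blast
qed

lemma tilt_V: assumes "p \<in> V" shows "tilt E d p \<in> V"
proof -
  obtain a b where p: "p = (a,b)" by fastforce
  show ?thesis
  proof (cases d)
    case L then show ?thesis using tiltL[of a b] hc_V assms p by force
  next
    case R then show ?thesis using tiltR[of a b] hc_V assms p by force
  next
    case U then show ?thesis using tiltU[of a b] vc_V assms p by force
  next
    case D then show ?thesis using tiltD[of a b] vc_V assms p by force
  qed
qed

lemma FE_V: "full_tilt_edges V E \<subseteq> V \<times> V"
  unfolding full_tilt_edges_def using tilt_V by auto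

end


context tb begin

definition Bs where "Bs = large_base V E S"
definition vb where "vb a b \<longleftrightarrow> (\<exists>d. (a,d) \<in> Bs \<and> vc E a b d)"
definition hb where "hb a b \<longleftrightarrow> (\<exists>c. (c,b) \<in> Bs \<and> hc E b a c)"

lemma corner_base: "corner_pixel V E c \<Longrightarrow> c \<in> Bs"
  unfolding Bs_def large_base_def by blast

lemma reflex_base: "reflex_corner V E c \<Longrightarrow> p \<in> incident c \<Longrightarrow> p \<in> V \<Longrightarrow> tilt E d p \<in> Bs"
  unfolding Bs_def large_base_def by blast

lemma Bs_V: "Bs \<subseteq> V"
proof
  fix q assume "q \<in> Bs"
  then consider (c) c where "corner_pixel V E c" "(c,q) \<in> (full_tilt_edges V E)\<^sup>*"
    | (s) "q \<in> S" | (t) s d where "s \<in> S" "q = tilt E d s"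
    | (r) c p d where "reflex_corner V E c" "p \<in> incident c" "p \<in> V" "q = tilt E d p"
    unfolding Bs_def large_base_def by blast
  then show "q \<in> V"
  proof cases
    case c
    have "c \<in> V" using c(1) unfolding corner_pixel_def by blast
    from c(2) this show ?thesis
      by (induction rule: rtrancl_induct) (use FE_V in auto)
  next
    case s then show ?thesis using SV by auto
  next
    case t then show ?thesis using SV tilt_V[of s d] by auto
  next
    case r then show ?thesis using tilt_V by auto
  qed
qed

lemma S_Bs: "S \<subseteq> Bs" unfolding Bs_def large_base_def by blast

lemma vb_const: "vc E x y y' \<Longrightarrow> vb x y' = vb x y"
  unfolding vb_def by (meson vc_sym vc_trans)
lemma hb_const: "hc E y x x' \<Longrightarrow> hb x' y = hb x y"
  unfolding hb_def by (meson hc_sym hc_trans)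

lemma L_char: "(x,y) \<in> large_vertices V E S \<longleftrightarrow> hb x y \<and> vb x y"
proof
  assume "(x,y) \<in> large_vertices V E S"
  then consider "(x,y) \<in> Bs" | a b where "a \<in> Bs" "b \<in> Bs" "(x,y) \<in> rowseg E a" "(x,y) \<in> colseg E b"
    unfolding large_vertices_def Bs_def by blast
  then show "hb x y \<and> vb x y"
  proof cases
    case 1 then show ?thesis unfolding hb_def vb_def using hc_refl vc_refl by blast
  next
    case 2
    obtain a1 a2 b1 b2 where ab: "a = (a1,a2)" "b = (b1,b2)" by fastforce
    then show ?thesis using 2 unfolding hb_def vb_def
      by (auto simp: rowseg_char colseg_char hc_sym vc_sym)
  qed
next
  assume "hb x y \<and> vb x y"
  then obtain c d where "(c,y) \<in> Bs" "hc E y x c" "(x,d) \<in> Bs" "vc E x y d"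
    unfolding hb_def vb_def by blast
  moreover have "(x,y) \<in> rowseg E (c,y)" "(x,y) \<in> colseg E (x,d)"
    using calculation by (auto simp: rowseg_char colseg_char hc_sym vc_sym)
  ultimately show "(x,y) \<in> large_vertices V E S"
    unfolding large_vertices_def Bs_def[symmetric] by blast
qed

lemma L_V: "large_vertices V E S \<subseteq> V"
proof
  fix p assume p: "p \<in> large_vertices V E S"
  obtain x y where xy: "p = (x,y)" by fastforce
  then obtain c where "(c,y) \<in> Bs" "hc E y x c" using p L_char unfolding hb_def by blast
  then show "p \<in> V" using hc_V[of y c x] hc_sym Bs_V xy by blast
qed

lemma vb_tiltU: "tilt E U (a,b) \<in> Bs \<Longrightarrow> vb a b"
  using tiltU[of a b] unfolding vb_def by force
lemma vb_tiltD: "tilt E D (a,b) \<in> Bs \<Longrightarrow> vb a b"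
  using tiltD[of a b] unfolding vb_def by force
lemma hb_tiltL: "tilt E L (a,b) \<in> Bs \<Longrightarrow> hb a b"
  using tiltL[of a b] unfolding hb_def by force
lemma hb_tiltR: "tilt E R (a,b) \<in> Bs \<Longrightarrow> hb a b"
  using tiltR[of a b] unfolding hb_def by force

lemma bs_h: "boundary_side V E p q \<longleftrightarrow> (p \<in> V \<or> q \<in> V) \<and> {p,q} \<notin> E"
  unfolding boundary_side_def by simp

lemma reflex_LL:
  assumes "(a,b) \<in> V" "hE E (a-1) b" "vE E a (b-1)"
    "((a-1,b) \<in> V \<and> \<not> vE E (a-1) (b-1)) \<or> ((a,b-1) \<in> V \<and> \<not> hE E (a-1) (b-1))"
    "q \<in> {(a-1,b-1),(a,b-1),(a-1,b),(a,b)}" "q \<in> V"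
  shows "tilt E d q \<in> Bs"
proof -
  have h1: "hx (a,b) (a,b) = (a-1,b)" "vy (a,b) (a,b) = (a,b-1)" "hx (a,b) (a,b-1) = (a-1,b-1)"
    by (simp_all add: hx_def vy_def)
  have inc: "incident (a,b) = {(a-1,b-1),(a,b-1),(a-1,b),(a,b)}" by (simp add: incident_def)
  have "reflex_corner V E (a,b)"
    apply (rule reflexI[where p="(a,b)"])
    using assms unfolding h1 inc bs_h hE_def vE_def by (auto simp: insert_commute)
  then show ?thesis using reflex_base assms(5,6) inc by blast
qed

lemma reflex_LR:
  assumes "(a,b) \<in> V" "hE E a b" "vE E a (b-1)"
    "((a+1,b) \<in> V \<and> \<not> vE E (a+1) (b-1)) \<or> ((a,b-1) \<in> V \<and> \<not> hE E a (b-1))"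
    "q \<in> {(a,b-1),(a+1,b-1),(a,b),(a+1,b)}" "q \<in> V"
  shows "tilt E d q \<in> Bs"
proof -
  have h1: "hx (a+1,b) (a,b) = (a+1,b)" "vy (a+1,b) (a,b) = (a,b-1)" "hx (a+1,b) (a,b-1) = (a+1,b-1)"
    by (simp_all add: hx_def vy_def)
  have inc: "incident (a+1,b) = {(a,b-1),(a+1,b-1),(a,b),(a+1,b)}" by (simp add: incident_def)
  have "reflex_corner V E (a+1,b)"
    apply (rule reflexI[where p="(a,b)"])
    using assms unfolding h1 inc bs_h hE_def vE_def by (auto simp: insert_commute)
  then show ?thesis using reflex_base assms(5,6) inc by blast
qed

lemma reflex_UL:
  assumes "(a,b) \<in> V" "hE E (a-1) b" "vE E a b"
    "((a-1,b) \<in> V \<and> \<not> vE E (a-1) b) \<or> ((a,b+1) \<in> V \<and> \<not> hE E (a-1) (b+1))"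
    "q \<in> {(a-1,b),(a,b),(a-1,b+1),(a,b+1)}" "q \<in> V"
  shows "tilt E d q \<in> Bs"
proof -
  have h1: "hx (a,b+1) (a,b) = (a-1,b)" "vy (a,b+1) (a,b) = (a,b+1)" "hx (a,b+1) (a,b+1) = (a-1,b+1)"
    by (simp_all add: hx_def vy_def)
  have inc: "incident (a,b+1) = {(a-1,b),(a,b),(a-1,b+1),(a,b+1)}" by (simp add: incident_def)
  have "reflex_corner V E (a,b+1)"
    apply (rule reflexI[where p="(a,b)"])
    using assms unfolding h1 inc bs_h hE_def vE_def by (auto simp: insert_commute)
  then show ?thesis using reflex_base assms(5,6) inc by blast
qed

lemma reflex_UR:
  assumes "(a,b) \<in> V" "hE E a b" "vE E a b"
    "((a+1,b) \<in> V \<and> \<not> vE E (a+1) b) \<or> ((a,b+1) \<in> V \<and> \<not> hE E a (b+1))"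
    "q \<in> {(a,b),(a+1,b),(a,b+1),(a+1,b+1)}" "q \<in> V"
  shows "tilt E d q \<in> Bs"
proof -
  have h1: "hx (a+1,b+1) (a,b) = (a+1,b)" "vy (a+1,b+1) (a,b) = (a,b+1)" "hx (a+1,b+1) (a,b+1) = (a+1,b+1)"
    by (simp_all add: hx_def vy_def)
  have inc: "incident (a+1,b+1) = {(a,b),(a+1,b),(a,b+1),(a+1,b+1)}" by (simp add: incident_def)
  have "reflex_corner V E (a+1,b+1)"
    apply (rule reflexI[where p="(a,b)"])
    using assms unfolding h1 inc bs_h hE_def vE_def by (auto simp: insert_commute)
  then show ?thesis using reflex_base assms(5,6) inc by blast
qed

end


context tb begin

lemma E1: assumes xy: "(x,y) \<in> V" and nh: "\<not> hE E (x-1) y" shows "vb x y"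
proof -
  obtain u0 where tU: "tilt E U (x,y) = (x,u0)" "vc E x y u0" "\<not> vE E x u0" using tiltU by blast
  have yu: "y \<le> u0"
  proof (rule ccontr)
    assume "\<not> y \<le> u0"
    then have "vE E x u0" using vc_edge[OF tU(2), of u0] by auto
    then show False using tU(3) by simp
  qed
  have "\<forall>i'. i' = i \<longrightarrow> vc E x y i' \<longrightarrow> \<not> hE E (x-1) i' \<longrightarrow> vb x y" if "i \<le> u0" for i
    using that
  proof (induction i rule: int_le_induct)
    case base
    show ?case
    proof (intro allI impI)
      fix i' assume "i' = u0" "vc E x y i'" "\<not> hE E (x-1) i'"
      then have a: "\<not> hE E (x-1) u0" by simp
      have "(x,u0) \<in> V" using vc_V[OF tU(2) xy] .
      moreover have "tilt E L (x,u0) = (x,u0)" using tiltL_eq[OF hc_refl] a by simp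
      moreover have "tilt E U (x,u0) = (x,u0)" using tiltU_eq[OF vc_refl] tU(3) by simp
      ultimately have "corner_pixel V E (x,u0)" unfolding corner_pixel_def by blast
      then have "(x,u0) \<in> Bs" by (rule corner_base)
      then show "vb x y" unfolding vb_def using tU(2) by blast
    qed
  next
    case (step i)
    show ?case
    proof (intro allI impI)
      fix i' assume i': "i' = i - 1" "vc E x y i'" "\<not> hE E (x-1) i'"
      have c1: "vc E x y (i-1)" "\<not> hE E (x-1) (i-1)" using i' by auto
      have "vc E x (i-1) u0" using vc_trans[OF c1(1)[unfolded vc_sym[of E x y]] tU(2)] .
      then have ve: "vE E x (i-1)" using vc_edge[of E x "i-1" u0 "i-1"] step.hyps by auto
      have ci: "vc E x y i" using vc_up[OF c1(1) ve] by simp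
      have iV: "(x,i) \<in> V" using vc_V[OF ci xy] .
      have i1V: "(x,i-1) \<in> V" using vc_V[OF c1(1) xy] .
      show "vb x y"
      proof (cases "hE E (x-1) i")
        case True
        have "tilt E U (x,i-1) \<in> Bs"
          by (rule reflex_LL[of x i]) (use iV True ve c1 i1V in auto)
        then have "vb x (i-1)" by (rule vb_tiltU)
        then show ?thesis using vb_const[OF c1(1)] by simp
      next
        case False
        then show ?thesis using step.IH ci by blast
      qed
    qed
  qed
  then show ?thesis using yu vc_refl nh by blast
qed

lemma E2: assumes xy: "(x,y) \<in> V" and nh: "\<not> hE E x y" shows "vb x y"
proof -
  obtain u0 where tU: "tilt E U (x,y) = (x,u0)" "vc E x y u0" "\<not> vE E x u0" using tiltU by blast
  have yu: "y \<le> u0"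
  proof (rule ccontr)
    assume "\<not> y \<le> u0"
    then have "vE E x u0" using vc_edge[OF tU(2), of u0] by auto
    then show False using tU(3) by simp
  qed
  have "\<forall>i'. i' = i \<longrightarrow> vc E x y i' \<longrightarrow> \<not> hE E x i' \<longrightarrow> vb x y" if "i \<le> u0" for i
    using that
  proof (induction i rule: int_le_induct)
    case base
    show ?case
    proof (intro allI impI)
      fix i' assume "i' = u0" "vc E x y i'" "\<not> hE E x i'"
      then have a: "\<not> hE E x u0" by simp
      have "(x,u0) \<in> V" using vc_V[OF tU(2) xy] .
      moreover have "tilt E R (x,u0) = (x,u0)" using tiltR_eq[OF hc_refl] a by simp
      moreover have "tilt E U (x,u0) = (x,u0)" using tiltU_eq[OF vc_refl] tU(3) by simp
      ultimately have "corner_pixel V E (x,u0)" unfolding corner_pixel_def by blast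
      then have "(x,u0) \<in> Bs" by (rule corner_base)
      then show "vb x y" unfolding vb_def using tU(2) by blast
    qed
  next
    case (step i)
    show ?case
    proof (intro allI impI)
      fix i' assume i': "i' = i - 1" "vc E x y i'" "\<not> hE E x i'"
      have c1: "vc E x y (i-1)" "\<not> hE E x (i-1)" using i' by auto
      have "vc E x (i-1) u0" using vc_trans[OF c1(1)[unfolded vc_sym[of E x y]] tU(2)] .
      then have ve: "vE E x (i-1)" using vc_edge[of E x "i-1" u0 "i-1"] step.hyps by auto
      have ci: "vc E x y i" using vc_up[OF c1(1) ve] by simp
      have iV: "(x,i) \<in> V" using vc_V[OF ci xy] .
      have i1V: "(x,i-1) \<in> V" using vc_V[OF c1(1) xy] .
      show "vb x y"
      proof (cases "hE E x i")
        case True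
        have "tilt E U (x,i-1) \<in> Bs"
          by (rule reflex_LR[of x i]) (use iV True ve c1 i1V in auto)
        then have "vb x (i-1)" by (rule vb_tiltU)
        then show ?thesis using vb_const[OF c1(1)] by simp
      next
        case False
        then show ?thesis using step.IH ci by blast
      qed
    qed
  qed
  then show ?thesis using yu vc_refl nh by blast
qed

lemma E3: assumes xy: "(x,y) \<in> V" and nv: "\<not> vE E x (y-1)" shows "hb x y"
proof -
  obtain r0 where tR: "tilt E R (x,y) = (r0,y)" "hc E y x r0" "\<not> hE E r0 y" using tiltR by blast
  have xr: "x \<le> r0"
  proof (rule ccontr)
    assume "\<not> x \<le> r0"
    then have "hE E r0 y" using hc_edge[OF tR(2), of r0] by auto
    then show False using tR(3) by simp
  qed
  have "\<forall>i'. i' = i \<longrightarrow> hc E y x i' \<longrightarrow> \<not> vE E i' (y-1) \<longrightarrow> hb x y" if "i \<le> r0" for i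
    using that
  proof (induction i rule: int_le_induct)
    case base
    show ?case
    proof (intro allI impI)
      fix i' assume "i' = r0" "hc E y x i'" "\<not> vE E i' (y-1)"
      then have a: "\<not> vE E r0 (y-1)" by simp
      have "(r0,y) \<in> V" using hc_V[OF tR(2) xy] .
      moreover have "tilt E R (r0,y) = (r0,y)" using tiltR_eq[OF hc_refl] tR(3) by simp
      moreover have "tilt E D (r0,y) = (r0,y)" using tiltD_eq[OF vc_refl] a by simp
      ultimately have "corner_pixel V E (r0,y)" unfolding corner_pixel_def by blast
      then have "(r0,y) \<in> Bs" by (rule corner_base)
      then show "hb x y" unfolding hb_def using tR(2) by blast
    qed
  next
    case (step i)
    show ?case
    proof (intro allI impI)
      fix i' assume i': "i' = i - 1" "hc E y x i'" "\<not> vE E i' (y-1)"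
      have c1: "hc E y x (i-1)" "\<not> vE E (i-1) (y-1)" using i' by auto
      have "hc E y (i-1) r0" using hc_trans[OF c1(1)[unfolded hc_sym[of E y x]] tR(2)] .
      then have he: "hE E (i-1) y" using hc_edge[of E y "i-1" r0 "i-1"] step.hyps by auto
      have ci: "hc E y x i" using hc_up[OF c1(1) he] by simp
      have iV: "(i,y) \<in> V" using hc_V[OF ci xy] .
      have i1V: "(i-1,y) \<in> V" using hc_V[OF c1(1) xy] .
      show "hb x y"
      proof (cases "vE E i (y-1)")
        case True
        have "tilt E R (i-1,y) \<in> Bs"
          by (rule reflex_LL[of i y]) (use iV True he c1 i1V in auto)
        then have "hb (i-1) y" by (rule hb_tiltR)
        then show ?thesis using hb_const[OF c1(1)] by simp
      next
        case False
        then show ?thesis using step.IH ci by blast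
      qed
    qed
  qed
  then show ?thesis using xr hc_refl nv by blast
qed

lemma E4: assumes xy: "(x,y) \<in> V" and nv: "\<not> vE E x y" shows "hb x y"
proof -
  obtain r0 where tR: "tilt E R (x,y) = (r0,y)" "hc E y x r0" "\<not> hE E r0 y" using tiltR by blast
  have xr: "x \<le> r0"
  proof (rule ccontr)
    assume "\<not> x \<le> r0"
    then have "hE E r0 y" using hc_edge[OF tR(2), of r0] by auto
    then show False using tR(3) by simp
  qed
  have "\<forall>i'. i' = i \<longrightarrow> hc E y x i' \<longrightarrow> \<not> vE E i' y \<longrightarrow> hb x y" if "i \<le> r0" for i
    using that
  proof (induction i rule: int_le_induct)
    case base
    show ?case
    proof (intro allI impI)
      fix i' assume "i' = r0" "hc E y x i'" "\<not> vE E i' y"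
      then have a: "\<not> vE E r0 y" by simp
      have "(r0,y) \<in> V" using hc_V[OF tR(2) xy] .
      moreover have "tilt E R (r0,y) = (r0,y)" using tiltR_eq[OF hc_refl] tR(3) by simp
      moreover have "tilt E U (r0,y) = (r0,y)" using tiltU_eq[OF vc_refl] a by simp
      ultimately have "corner_pixel V E (r0,y)" unfolding corner_pixel_def by blast
      then have "(r0,y) \<in> Bs" by (rule corner_base)
      then show "hb x y" unfolding hb_def using tR(2) by blast
    qed
  next
    case (step i)
    show ?case
    proof (intro allI impI)
      fix i' assume i': "i' = i - 1" "hc E y x i'" "\<not> vE E i' y"
      have c1: "hc E y x (i-1)" "\<not> vE E (i-1) y" using i' by auto
      have "hc E y (i-1) r0" using hc_trans[OF c1(1)[unfolded hc_sym[of E y x]] tR(2)] .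
      then have he: "hE E (i-1) y" using hc_edge[of E y "i-1" r0 "i-1"] step.hyps by auto
      have ci: "hc E y x i" using hc_up[OF c1(1) he] by simp
      have iV: "(i,y) \<in> V" using hc_V[OF ci xy] .
      have i1V: "(i-1,y) \<in> V" using hc_V[OF c1(1) xy] .
      show "hb x y"
      proof (cases "vE E i y")
        case True
        have "tilt E R (i-1,y) \<in> Bs"
          by (rule reflex_UL[of i y]) (use iV True he c1 i1V in auto)
        then have "hb (i-1) y" by (rule hb_tiltR)
        then show ?thesis using hb_const[OF c1(1)] by simp
      next
        case False
        then show ?thesis using step.IH ci by blast
      qed
    qed
  qed
  then show ?thesis using xr hc_refl nv by blast
qed

end


context tb begin

lemma S1:
  assumes xy: "(x,y) \<in> V" and nvb: "\<not> vb x y"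
  shows "vc E (x-1) y y' \<longleftrightarrow> vc E x y y'"
proof -
  have a: "hE E (x-1) y'" if "vc E x y y'" for y'
  proof -
    have "(x,y') \<in> V" using vc_V[OF that xy] .
    moreover have "\<not> vb x y'" using vb_const[OF that] nvb by simp
    ultimately show ?thesis using E1 by blast
  qed
  have b: "vE E (x-1) y'" if "vc E x y y'" "vE E x y'" for y'
  proof (rule ccontr)
    assume n: "\<not> vE E (x-1) y'"
    have xV: "(x,y') \<in> V" using vc_V[OF that(1) xy] .
    have "tilt E U (x,y') \<in> Bs"
      by (rule reflex_UL[of x y']) (use xV a[OF that(1)] that(2) n hE_V[OF a[OF that(1)]] in auto)
    then have "vb x y'" by (rule vb_tiltU)
    then show False using vb_const[OF that(1)] nvb by simp
  qed
  have c: "\<not> vE E (x-1) y'" if "vc E x y y'" "\<not> vE E x y'" for y'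
  proof
    assume n: "vE E (x-1) y'"
    have xV: "(x,y') \<in> V" using vc_V[OF that(1) xy] .
    have h: "hE E (x-1) y'" using a[OF that(1)] .
    have "tilt E U (x,y') \<in> Bs"
      by (rule reflex_UR[of "x-1" y']) (use xV h that(2) n hE_V[OF h] in auto)
    then have "vb x y'" by (rule vb_tiltU)
    then show False using vb_const[OF that(1)] nvb by simp
  qed
  have d: "\<not> vE E (x-1) (y'-1)" if "vc E x y y'" "\<not> vE E x (y'-1)" for y'
  proof
    assume n: "vE E (x-1) (y'-1)"
    have xV: "(x,y') \<in> V" using vc_V[OF that(1) xy] .
    have h: "hE E (x-1) y'" using a[OF that(1)] .
    have "tilt E U (x,y') \<in> Bs"
      by (rule reflex_LR[of "x-1" y']) (use xV h that(2) n hE_V[OF h] in auto)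
    then have "vb x y'" by (rule vb_tiltU)
    then show False using vb_const[OF that(1)] nvb by simp
  qed
  show ?thesis
  proof
    assume h: "vc E x y y'"
    show "vc E (x-1) y y'" unfolding vc_def
    proof (intro allI impI)
      fix k assume k: "min y y' \<le> k \<and> k < max y y'"
      have "vE E x k" using vc_edge[OF h] k by auto
      moreover have "vc E x y k" using vc_mid[OF h] k by auto
      ultimately show "vE E (x-1) k" using b by blast
    qed
  next
    assume h: "vc E (x-1) y y'"
    have up: "vc E (x-1) y j \<longrightarrow> vc E x y j" if "y \<le> j" for j
      using that
    proof (induction j rule: int_ge_induct)
      case base then show ?case by (simp add: vc_refl)
    next
      case (step i)
      show ?case
      proof
        assume h1: "vc E (x-1) y (i+1)"
        have "vc E (x-1) y i" using vc_mid[OF h1] step.hyps by auto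
        then have ci: "vc E x y i" using step.IH by blast
        have "vE E (x-1) i" using vc_edge[OF h1] step.hyps by auto
        then have "vE E x i" using c[OF ci] by blast
        then show "vc E x y (i+1)" using vc_up[OF ci] by simp
      qed
    qed
    have dn: "vc E (x-1) y j \<longrightarrow> vc E x y j" if "j \<le> y" for j
      using that
    proof (induction j rule: int_le_induct)
      case base then show ?case by (simp add: vc_refl)
    next
      case (step i)
      show ?case
      proof
        assume h1: "vc E (x-1) y (i-1)"
        have "vc E (x-1) y i" using vc_mid[OF h1] step.hyps by auto
        then have ci: "vc E x y i" using step.IH by blast
        have "vE E (x-1) (i-1)" using vc_edge[OF h1, of "i-1"] step.hyps by auto
        then have "vE E x (i-1)" using d[OF ci] by blast
        then show "vc E x y (i-1)" using vc_down[OF ci] by simp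
      qed
    qed
    show "vc E x y y'" using up dn h by (cases "y \<le> y'") auto
  qed
qed

lemma S2:
  assumes xy: "(x,y) \<in> V" and nhb: "\<not> hb x y"
  shows "hc E (y-1) x x' \<longleftrightarrow> hc E y x x'"
proof -
  have a: "vE E x' (y-1)" if "hc E y x x'" for x'
  proof -
    have "(x',y) \<in> V" using hc_V[OF that xy] .
    moreover have "\<not> hb x' y" using hb_const[OF that] nhb by simp
    ultimately show ?thesis using E3 by blast
  qed
  have b: "hE E x' (y-1)" if "hc E y x x'" "hE E x' y" for x'
  proof (rule ccontr)
    assume n: "\<not> hE E x' (y-1)"
    have xV: "(x',y) \<in> V" using hc_V[OF that(1) xy] .
    have "tilt E R (x',y) \<in> Bs"
      by (rule reflex_LR[of x' y]) (use xV a[OF that(1)] that(2) n vE_V[OF a[OF that(1)]] in auto)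
    then have "hb x' y" by (rule hb_tiltR)
    then show False using hb_const[OF that(1)] nhb by simp
  qed
  have c: "\<not> hE E x' (y-1)" if "hc E y x x'" "\<not> hE E x' y" for x'
  proof
    assume n: "hE E x' (y-1)"
    have xV: "(x',y) \<in> V" using hc_V[OF that(1) xy] .
    have v: "vE E x' (y-1)" using a[OF that(1)] .
    have "tilt E R (x',y) \<in> Bs"
      by (rule reflex_UR[of x' "y-1"]) (use xV v that(2) n vE_V[OF v] in auto)
    then have "hb x' y" by (rule hb_tiltR)
    then show False using hb_const[OF that(1)] nhb by simp
  qed
  have d: "\<not> hE E (x'-1) (y-1)" if "hc E y x x'" "\<not> hE E (x'-1) y" for x'
  proof
    assume n: "hE E (x'-1) (y-1)"
    have xV: "(x',y) \<in> V" using hc_V[OF that(1) xy] .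
    have v: "vE E x' (y-1)" using a[OF that(1)] .
    have "tilt E R (x',y) \<in> Bs"
      by (rule reflex_UL[of x' "y-1"]) (use xV v that(2) n vE_V[OF v] in auto)
    then have "hb x' y" by (rule hb_tiltR)
    then show False using hb_const[OF that(1)] nhb by simp
  qed
  show ?thesis
  proof
    assume h: "hc E y x x'"
    show "hc E (y-1) x x'" unfolding hc_def
    proof (intro allI impI)
      fix k assume k: "min x x' \<le> k \<and> k < max x x'"
      have "hE E k y" using hc_edge[OF h] k by auto
      moreover have "hc E y x k" using hc_mid[OF h] k by auto
      ultimately show "hE E k (y-1)" using b by blast
    qed
  next
    assume h: "hc E (y-1) x x'"
    have up: "hc E (y-1) x j \<longrightarrow> hc E y x j" if "x \<le> j" for j
      using that
    proof (induction j rule: int_ge_induct)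
      case base then show ?case by (simp add: hc_refl)
    next
      case (step i)
      show ?case
      proof
        assume h1: "hc E (y-1) x (i+1)"
        have "hc E (y-1) x i" using hc_mid[OF h1] step.hyps by auto
        then have ci: "hc E y x i" using step.IH by blast
        have "hE E i (y-1)" using hc_edge[OF h1] step.hyps by auto
        then have "hE E i y" using c[OF ci] by blast
        then show "hc E y x (i+1)" using hc_up[OF ci] by simp
      qed
    qed
    have dn: "hc E (y-1) x j \<longrightarrow> hc E y x j" if "j \<le> x" for j
      using that
    proof (induction j rule: int_le_induct)
      case base then show ?case by (simp add: hc_refl)
    next
      case (step i)
      show ?case
      proof
        assume h1: "hc E (y-1) x (i-1)"
        have "hc E (y-1) x i" using hc_mid[OF h1] step.hyps by auto
        then have ci: "hc E y x i" using step.IH by blast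
        have "hE E (i-1) (y-1)" using hc_edge[OF h1, of "i-1"] step.hyps by auto
        then have "hE E (i-1) y" using d[OF ci] by blast
        then show "hc E y x (i-1)" using hc_down[OF ci] by simp
      qed
    qed
    show "hc E y x x'" using up dn h by (cases "x \<le> x'") auto
  qed
qed

end


context tb begin

definition Xs where "Xs x y = {x'. x' \<le> x \<and> hc E y x x' \<and> vb x' y}"
definition Xf where "Xf x y = Max (Xs x y)"
definition Ys where "Ys x y = {y'. y' \<le> y \<and> vc E x y y' \<and> hb x y'}"
definition Yf where "Yf x y = Max (Ys x y)"

lemma X_props:
  assumes xy: "(x,y) \<in> V"
  shows "finite (Xs x y)" "Xf x y \<in> Xs x y" "\<And>x'. Xf x y < x' \<Longrightarrow> x' \<le> x \<Longrightarrow> \<not> vb x' y"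
proof -
  show fin: "finite (Xs x y)" unfolding Xs_def by (rule finite_subset[OF _ finA_h]) auto
  obtain l where l: "hc E y x l" "\<not> hE E (l-1) y" using tiltL by blast
  have lx: "l \<le> x"
  proof (rule ccontr)
    assume "\<not> l \<le> x"
    then have "hE E (l-1) y" using hc_edge[OF l(1), of "l-1"] by auto
    then show False using l(2) by simp
  qed
  have "vb l y" using E1[OF hc_V[OF l(1) xy] l(2)] .
  then have "l \<in> Xs x y" unfolding Xs_def using l lx by auto
  then show mem: "Xf x y \<in> Xs x y" unfolding Xf_def using Max_in[OF fin] by auto
  fix x' assume a: "Xf x y < x'" "x' \<le> x"
  show "\<not> vb x' y"
  proof
    assume vb: "vb x' y"
    have "hc E y x (Xf x y)" using mem unfolding Xs_def by auto
    then have "hc E y x x'" using hc_mid[of E y x "Xf x y" x'] a by auto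
    then have "x' \<in> Xs x y" unfolding Xs_def using a vb by auto
    then have "x' \<le> Xf x y" unfolding Xf_def using Max_ge[OF fin] by auto
    then show False using a by simp
  qed
qed

lemma X_le: "(x,y) \<in> V \<Longrightarrow> Xf x y \<le> x \<and> hc E y x (Xf x y) \<and> vb (Xf x y) y"
  using X_props(2) unfolding Xs_def by auto

lemma X_strip:
  assumes xy: "(x,y) \<in> V" and a: "Xf x y \<le> x'" "x' \<le> x"
  shows "(\<forall>y'. vc E x' y y' \<longleftrightarrow> vc E x y y') \<and> hc E y x x'"
proof -
  have "Xf x y \<le> i \<longrightarrow> (\<forall>y'. vc E i y y' \<longleftrightarrow> vc E x y y') \<and> hc E y x i" if "i \<le> x" for i
    using that
  proof (induction i rule: int_le_induct)
    case base then show ?case by (simp add: hc_refl)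
  next
    case (step i)
    show ?case
    proof
      assume h: "Xf x y \<le> i - 1"
      then have IH: "(\<forall>y'. vc E i y y' \<longleftrightarrow> vc E x y y') \<and> hc E y x i" using step.IH by simp
      have nvb: "\<not> vb i y" using X_props(3)[OF xy, of i] h step.hyps by simp
      have iV: "(i,y) \<in> V" using hc_V[OF _ xy] IH by blast
      have "hE E (i-1) y" using E1[OF iV] nvb by blast
      then have "hc E y x (i-1)" using hc_down IH by blast
      moreover have "\<forall>y'. vc E (i-1) y y' \<longleftrightarrow> vc E x y y'" using S1[OF iV nvb] IH by blast
      ultimately show "(\<forall>y'. vc E (i-1) y y' \<longleftrightarrow> vc E x y y') \<and> hc E y x (i-1)" by blast
    qed
  qed
  then show ?thesis using a by blast
qed

lemma X_vb: assumes "(x,y) \<in> V" "vb x y" shows "Xf x y = x"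
proof -
  have "Xf x y \<le> x" using X_le[OF assms(1)] by simp
  moreover have "\<not> Xf x y < x" using X_props(3)[OF assms(1), of x] assms(2) by auto
  ultimately show ?thesis by simp
qed

lemma X_col:
  assumes xy: "(x,y) \<in> V" and c: "vc E x y y'"
  shows "Xf x y' = Xf x y"
proof -
  let ?X = "Xf x y"
  have X: "?X \<le> x" "hc E y x ?X" "vb ?X y" using X_le[OF xy] by auto
  have y'V: "(x,y') \<in> V" using vc_V[OF c xy] .
  have fin: "finite (Xs x y')" using X_props(1)[OF y'V] .
  have st: "\<And>x'. ?X \<le> x' \<Longrightarrow> x' \<le> x \<Longrightarrow> vc E x' y y'"
    using X_strip[OF xy] c by blast
  have mem: "?X \<in> Xs x y'"
  proof -
    have "vb ?X y'" using vb_const[OF st[OF order.refl X(1)]] X(3) by simp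
    moreover have "hc E y' x ?X" unfolding hc_def
    proof (intro allI impI)
      fix k assume k: "min x ?X \<le> k \<and> k < max x ?X"
      then have k1: "?X < k + 1" "k + 1 \<le> x" using X(1) by auto
      have nvb: "\<not> vb (k+1) y" using X_props(3)[OF xy k1] .
      have h: "hc E y x (k+1)" using X_strip[OF xy] k1 by simp
      have kV: "(k+1,y) \<in> V" using hc_V[OF h xy] .
      have vc1: "vc E (k+1) y y'" using st k1 by simp
      have "(k+1,y') \<in> V" using vc_V[OF vc1 kV] .
      moreover have "\<not> vb (k+1) y'" using vb_const[OF vc1] nvb by simp
      ultimately have "hE E (k+1-1) y'" using E1 by blast
      then show "hE E k y'" by simp
    qed
    ultimately show ?thesis unfolding Xs_def using X(1) by auto
  qed
  show ?thesis unfolding Xf_def[of x y']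
  proof (rule Max_eqI[OF fin _ mem])
    fix z assume z: "z \<in> Xs x y'"
    show "z \<le> ?X"
    proof (rule ccontr)
      assume "\<not> z \<le> ?X"
      then have z1: "?X < z" "z \<le> x" using z unfolding Xs_def by auto
      have "vb z y'" using z unfolding Xs_def by auto
      then have "vb z y" using vb_const[OF st[OF _ z1(2)]] z1 by simp
      then show False using X_props(3)[OF xy z1] by simp
    qed
  qed
qed

lemma Y_props:
  assumes xy: "(x,y) \<in> V"
  shows "finite (Ys x y)" "Yf x y \<in> Ys x y" "\<And>y'. Yf x y < y' \<Longrightarrow> y' \<le> y \<Longrightarrow> \<not> hb x y'"
proof -
  show fin: "finite (Ys x y)" unfolding Ys_def by (rule finite_subset[OF _ finA_v]) auto
  obtain l where l: "vc E x y l" "\<not> vE E x (l-1)" using tiltD by blast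
  have lx: "l \<le> y"
  proof (rule ccontr)
    assume "\<not> l \<le> y"
    then have "vE E x (l-1)" using vc_edge[OF l(1), of "l-1"] by auto
    then show False using l(2) by simp
  qed
  have "hb x l" using E3[OF vc_V[OF l(1) xy] l(2)] .
  then have "l \<in> Ys x y" unfolding Ys_def using l lx by auto
  then show mem: "Yf x y \<in> Ys x y" unfolding Yf_def using Max_in[OF fin] by auto
  fix y' assume a: "Yf x y < y'" "y' \<le> y"
  show "\<not> hb x y'"
  proof
    assume hb: "hb x y'"
    have "vc E x y (Yf x y)" using mem unfolding Ys_def by auto
    then have "vc E x y y'" using vc_mid[of E x y "Yf x y" y'] a by auto
    then have "y' \<in> Ys x y" unfolding Ys_def using a hb by auto
    then have "y' \<le> Yf x y" unfolding Yf_def using Max_ge[OF fin] by auto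
    then show False using a by simp
  qed
qed

lemma Y_le: "(x,y) \<in> V \<Longrightarrow> Yf x y \<le> y \<and> vc E x y (Yf x y) \<and> hb x (Yf x y)"
  using Y_props(2) unfolding Ys_def by auto

lemma Y_strip:
  assumes xy: "(x,y) \<in> V" and a: "Yf x y \<le> y'" "y' \<le> y"
  shows "(\<forall>x'. hc E y' x x' \<longleftrightarrow> hc E y x x') \<and> vc E x y y'"
proof -
  have "Yf x y \<le> i \<longrightarrow> (\<forall>x'. hc E i x x' \<longleftrightarrow> hc E y x x') \<and> vc E x y i" if "i \<le> y" for i
    using that
  proof (induction i rule: int_le_induct)
    case base then show ?case by (simp add: vc_refl)
  next
    case (step i)
    show ?case
    proof
      assume h: "Yf x y \<le> i - 1"
      then have IH: "(\<forall>x'. hc E i x x' \<longleftrightarrow> hc E y x x') \<and> vc E x y i" using step.IH by simp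
      have nhb: "\<not> hb x i" using Y_props(3)[OF xy, of i] h step.hyps by simp
      have iV: "(x,i) \<in> V" using vc_V[OF _ xy] IH by blast
      have "vE E x (i-1)" using E3[OF iV] nhb by blast
      then have "vc E x y (i-1)" using vc_down IH by blast
      moreover have "\<forall>x'. hc E (i-1) x x' \<longleftrightarrow> hc E y x x'" using S2[OF iV nhb] IH by blast
      ultimately show "(\<forall>x'. hc E (i-1) x x' \<longleftrightarrow> hc E y x x') \<and> vc E x y (i-1)" by blast
    qed
  qed
  then show ?thesis using a by blast
qed

lemma Y_hb: assumes "(x,y) \<in> V" "hb x y" shows "Yf x y = y"
proof -
  have "Yf x y \<le> y" using Y_le[OF assms(1)] by simp
  moreover have "\<not> Yf x y < y" using Y_props(3)[OF assms(1), of y] assms(2) by auto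
  ultimately show ?thesis by simp
qed

lemma Y_row:
  assumes xy: "(x,y) \<in> V" and c: "hc E y x x'"
  shows "Yf x' y = Yf x y"
proof -
  let ?Y = "Yf x y"
  have Y: "?Y \<le> y" "vc E x y ?Y" "hb x ?Y" using Y_le[OF xy] by auto
  have x'V: "(x',y) \<in> V" using hc_V[OF c xy] .
  have fin: "finite (Ys x' y)" using Y_props(1)[OF x'V] .
  have st: "\<And>y'. ?Y \<le> y' \<Longrightarrow> y' \<le> y \<Longrightarrow> hc E y' x x'"
    using Y_strip[OF xy] c by blast
  have mem: "?Y \<in> Ys x' y"
  proof -
    have "hb x' ?Y" using hb_const[OF st[OF order.refl Y(1)]] Y(3) by simp
    moreover have "vc E x' y ?Y" unfolding vc_def
    proof (intro allI impI)
      fix k assume k: "min y ?Y \<le> k \<and> k < max y ?Y"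
      then have k1: "?Y < k + 1" "k + 1 \<le> y" using Y(1) by auto
      have nhb: "\<not> hb x (k+1)" using Y_props(3)[OF xy k1] .
      have h: "vc E x y (k+1)" using Y_strip[OF xy] k1 by simp
      have kV: "(x,k+1) \<in> V" using vc_V[OF h xy] .
      have hc1: "hc E (k+1) x x'" using st k1 by simp
      have "(x',k+1) \<in> V" using hc_V[OF hc1 kV] .
      moreover have "\<not> hb x' (k+1)" using hb_const[OF hc1] nhb by simp
      ultimately have "vE E x' (k+1-1)" using E3 by blast
      then show "vE E x' k" by simp
    qed
    ultimately show ?thesis unfolding Ys_def using Y(1) by auto
  qed
  show ?thesis unfolding Yf_def[of x' y]
  proof (rule Max_eqI[OF fin _ mem])
    fix z assume z: "z \<in> Ys x' y"
    show "z \<le> ?Y"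
    proof (rule ccontr)
      assume "\<not> z \<le> ?Y"
      then have z1: "?Y < z" "z \<le> y" using z unfolding Ys_def by auto
      have "hb x' z" using z unfolding Ys_def by auto
      then have "hb x z" using hb_const[OF st[OF _ z1(2)]] z1 by simp
      then show False using Y_props(3)[OF xy z1] by simp
    qed
  qed
qed

end


context tb begin

definition sg where "sg p = (Xf (fst p) (snd p), Yf (fst p) (snd p))"

lemma sg_basic:
  assumes xy: "(x,y) \<in> V"
  shows "hc E y x (Xf x y)" "vc E x y (Yf x y)"
    "\<And>y'. vc E (Xf x y) y y' \<longleftrightarrow> vc E x y y'"
    "\<And>x'. hc E (Yf x y) x x' \<longleftrightarrow> hc E y x x'"
    "Xf x y \<le> x" "Yf x y \<le> y"
  using X_le[OF xy] Y_le[OF xy] X_strip[OF xy, of "Xf x y"] Y_strip[OF xy, of "Yf x y"] by auto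

lemma sg_tilt:
  assumes xy: "(x,y) \<in> V"
  shows "sg (tilt E d (x,y)) = tilt E d (sg (x,y))"
proof -
  let ?X = "Xf x y" and ?Y = "Yf x y"
  note b = sg_basic[OF xy]
  have hYX: "hc E ?Y ?X x" using b(1) b(4)[of ?X] hc_sym by blast
  have vXY: "vc E ?X ?Y y" using b(2) b(3)[of ?Y] vc_sym by blast
  show ?thesis
  proof (cases d)
    case L
    obtain l where l: "tilt E L (x,y) = (l,y)" "hc E y x l" "\<not> hE E (l-1) y" using tiltL by blast
    have lx: "l \<le> x"
    proof (rule ccontr)
      assume "\<not> l \<le> x"
      then have "hE E (l-1) y" using hc_edge[OF l(2), of "l-1"] by auto
      then show False using l(3) by simp
    qed
    have lV: "(l,y) \<in> V" using hc_V[OF l(2) xy] .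
    have s1: "sg (l,y) = (l, ?Y)" unfolding sg_def using X_vb[OF lV E1[OF lV l(3)]] Y_row[OF xy l(2)] by simp
    have h1: "hc E ?Y x l" using b(4) l(2) by blast
    have h2: "hc E ?Y ?X l" using hc_trans[OF hYX h1] .
    have h3: "\<not> hE E (l-1) ?Y"
    proof
      assume "hE E (l-1) ?Y"
      then have "hc E ?Y x (l-1)" using hc_down[OF h1] by simp
      then have "hc E y x (l-1)" using b(4) by blast
      then have "hE E (l-1) y" using hc_edge[of E y x "l-1" "l-1"] lx by auto
      then show False using l(3) by simp
    qed
    have "tilt E L (?X, ?Y) = (l, ?Y)" by (rule tiltL_eq[OF h2 h3])
    then show ?thesis using L l(1) s1 by (simp add: sg_def)
  next
    case R
    obtain r where r: "tilt E R (x,y) = (r,y)" "hc E y x r" "\<not> hE E r y" using tiltR by blast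
    have rx: "x \<le> r"
    proof (rule ccontr)
      assume "\<not> x \<le> r"
      then have "hE E r y" using hc_edge[OF r(2), of r] by auto
      then show False using r(3) by simp
    qed
    have rV: "(r,y) \<in> V" using hc_V[OF r(2) xy] .
    have s1: "sg (r,y) = (r, ?Y)" unfolding sg_def using X_vb[OF rV E2[OF rV r(3)]] Y_row[OF xy r(2)] by simp
    have h1: "hc E ?Y x r" using b(4) r(2) by blast
    have h2: "hc E ?Y ?X r" using hc_trans[OF hYX h1] .
    have h3: "\<not> hE E r ?Y"
    proof
      assume "hE E r ?Y"
      then have "hc E ?Y x (r+1)" using hc_up[OF h1] by simp
      then have "hc E y x (r+1)" using b(4) by blast
      then have "hE E r y" using hc_edge[of E y x "r+1" r] rx by auto
      then show False using r(3) by simp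
    qed
    have "tilt E R (?X, ?Y) = (r, ?Y)" by (rule tiltR_eq[OF h2 h3])
    then show ?thesis using R r(1) s1 by (simp add: sg_def)
  next
    case U
    obtain u where u: "tilt E U (x,y) = (x,u)" "vc E x y u" "\<not> vE E x u" using tiltU by blast
    have uy: "y \<le> u"
    proof (rule ccontr)
      assume "\<not> y \<le> u"
      then have "vE E x u" using vc_edge[OF u(2), of u] by auto
      then show False using u(3) by simp
    qed
    have uV: "(x,u) \<in> V" using vc_V[OF u(2) xy] .
    have s1: "sg (x,u) = (?X, u)" unfolding sg_def using X_col[OF xy u(2)] Y_hb[OF uV E4[OF uV u(3)]] by simp
    have h1: "vc E ?X y u" using b(3) u(2) by blast
    have h2: "vc E ?X ?Y u" using vc_trans[OF vXY h1] .
    have h3: "\<not> vE E ?X u"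
    proof
      assume "vE E ?X u"
      then have "vc E ?X y (u+1)" using vc_up[OF h1] by simp
      then have "vc E x y (u+1)" using b(3) by blast
      then have "vE E x u" using vc_edge[of E x y "u+1" u] uy by auto
      then show False using u(3) by simp
    qed
    have "tilt E U (?X, ?Y) = (?X, u)" by (rule tiltU_eq[OF h2 h3])
    then show ?thesis using U u(1) s1 by (simp add: sg_def)
  next
    case D
    obtain l where l: "tilt E D (x,y) = (x,l)" "vc E x y l" "\<not> vE E x (l-1)" using tiltD by blast
    have ly: "l \<le> y"
    proof (rule ccontr)
      assume "\<not> l \<le> y"
      then have "vE E x (l-1)" using vc_edge[OF l(2), of "l-1"] by auto
      then show False using l(3) by simp
    qed
    have lV: "(x,l) \<in> V" using vc_V[OF l(2) xy] .
    have s1: "sg (x,l) = (?X, l)" unfolding sg_def using X_col[OF xy l(2)] Y_hb[OF lV E3[OF lV l(3)]] by simp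
    have h1: "vc E ?X y l" using b(3) l(2) by blast
    have h2: "vc E ?X ?Y l" using vc_trans[OF vXY h1] .
    have h3: "\<not> vE E ?X (l-1)"
    proof
      assume "vE E ?X (l-1)"
      then have "vc E ?X y (l-1)" using vc_down[OF h1] by simp
      then have "vc E x y (l-1)" using b(3) by blast
      then have "vE E x (l-1)" using vc_edge[of E x y "l-1" "l-1"] ly by auto
      then show False using l(3) by simp
    qed
    have "tilt E D (?X, ?Y) = (?X, l)" by (rule tiltD_eq[OF h2 h3])
    then show ?thesis using D l(1) s1 by (simp add: sg_def)
  qed
qed

lemma sg_L: assumes "p \<in> V" shows "sg p \<in> large_vertices V E S"
proof -
  obtain x y where p: "p = (x,y)" by fastforce
  then have xy: "(x,y) \<in> V" using assms by simp
  let ?X = "Xf x y" and ?Y = "Yf x y"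
  note b = sg_basic[OF xy]
  have "vb ?X y" using X_le[OF xy] by simp
  moreover have "vc E ?X y ?Y" using b(2) b(3) by blast
  ultimately have v: "vb ?X ?Y" using vb_const by blast
  have "hb x ?Y" using Y_le[OF xy] by simp
  moreover have "hc E ?Y x ?X" using b(1) b(4) by blast
  ultimately have h: "hb ?X ?Y" using hb_const by blast
  show ?thesis using L_char v h p by (simp add: sg_def)
qed

lemma sg_id: assumes "p \<in> large_vertices V E S" shows "sg p = p"
proof -
  obtain x y where p: "p = (x,y)" by fastforce
  have hv: "hb x y" "vb x y" using assms p L_char by auto
  have xy: "(x,y) \<in> V" using assms p L_V by auto
  show ?thesis using X_vb[OF xy hv(2)] Y_hb[OF xy hv(1)] p by (simp add: sg_def)
qed

lemma sg_hom:
  assumes "(u,v) \<in> full_tilt_edges V E" "sg u \<noteq> sg v"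
  shows "(sg u, sg v) \<in> full_tilt_edges V E"
proof -
  obtain d where uv: "u \<in> V" "v = tilt E d u" using assms(1) unfolding full_tilt_edges_def by blast
  obtain x y where p: "u = (x,y)" by fastforce
  have "sg v = tilt E d (sg u)" using sg_tilt[of x y d] uv p by simp
  moreover have "sg u \<in> V" using sg_L[OF uv(1)] L_V by blast
  ultimately have "\<exists>p dd. (sg u, sg v) = (p, tilt E dd p) \<and> p \<in> V \<and> tilt E dd p \<noteq> p"
    using assms(2) by metis
  then show ?thesis unfolding full_tilt_edges_def by blast
qed

end

theorem mainTheorem10:
  fixes V :: "pixel set" and E :: "pixel set set" and S :: "pixel set"
    and T :: "(pixel option \<times> pixel option) set" and w :: nat
  assumes "board V E"
    and "S \<subseteq> V"
    and "arborescence_to (ext_vertices V) (ext_edges (full_tilt_edges V E) S) None T"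
    and "tree_weight (full_tilt_edges V E) T = w"
  shows "\<exists>T'. arborescence_to (ext_vertices (large_vertices V E S))
              (ext_edges (large_tilt_edges V E S) S) None T'
          \<and> tree_weight (large_tilt_edges V E S) T' \<le> w"
proof -
  interpret tb V E S using assms(1,2) by unfold_locales
  have "S \<subseteq> large_vertices V E S" using S_Bs unfolding large_vertices_def Bs_def by blast
  then show ?thesis
    using abstract_retract[OF finV FE_V L_V _ sg_L sg_id sg_hom _ assms(3)] assms(4)
    unfolding large_tilt_edges_def by blast
qed

end
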